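(* Let $a,b\ge 0$ and $n=a+b$. There is a bijection $g:\mathcal Y_{a,b}\to\mathcal Y_{a,b}$ such that for every $P\in\mathcal Y_{a,b}$, $$\mathrm{Peak}(P)=\mathrm{hd}(g(P))\qquad\text{and}\qquad \mathrm{Peak}^*(P)=\mathrm{hd}^*(g(P)).$$
   Context: $\mathcal Y_{a,b}$ is the set of lattice paths with unit steps $N$ and $E$ from $(0,0)$ to $(b,a)$ (so $a$ steps $N$ and $b$ steps $E$); each such path is identified with the Young diagram $\lambda$ fitting in the $a\times b$ rectangle (placed against its upper and left sides) whose southeast boundary is the path. Label the vertices of $P$ by $0,1,\dots,n$ starting from the origin. A peak is an occurrence of consecutive steps $NE$; $\mathrm{Peak}(P)$ is the set of labels of the vertices lying between the $N$ and the $E$ of a peak. $\mathrm{Peak}^*(P)=\mathrm{Peak}(PE)$, where $PE$ is $P$ followed by an extra $E$ step; thus $\mathrm{Peak}^*(P)=\mathrm{Peak}(P)\cup\{n\}$ if $P$ ends with $N$ and $\mathrm{Peak}(P)$ otherwise. The hook decomposition $\mathrm{hd}(P)$ of the diagram $\lambda$ with rows $\lambda_1\ge\lambda_2\ge\cdots$, conjugate $\lambda'$, and Durfee square of side $d$ (largest $d$ with $\lambda_d\ge d$) is the set $\{\lambda_i+\lambda'_i-2i+1: 1\le i\le d\}$, i.e. the sizes of the hooks obtained by successively peeling off the largest hook (first row and first column). $\mathrm{hd}^*(P)=\mathrm{hd}(P)\cup\{n\}$ if $P$ begins with an $N$ step, and $\mathrm{hd}^*(P)=\mathrm{hd}(P)$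 otherwise. *)

theory Defs
  imports Main
begin

text \<open>A lattice path is a list of steps; True = N (north), False = E (east).\<close>

definition Y :: "nat \<Rightarrow> nat \<Rightarrow> bool list set" where
  "Y a b = {P. length P = a + b \<and> count_list P True = a}"

text \<open>Vertices are labelled 0..n; vertex i is reached after the first i steps.
  A peak is steps i (N) and i+1 (E) (0-indexed), the vertex between them has label i+1.\<close>

definition Peak :: "bool list \<Rightarrow> nat set" where
  "Peak P = {i + 1 | i. Suc i < length P \<and> P ! i \<and> \<not> P ! Suc i}"

definition PeakStar :: "bool list \<Rightarrow> nat set" where
  "PeakStar P = Peak (P @ [False])"

text \<open>Young diagram of a path in the a x b rectangle (a = number of N steps):
  row i (1-indexed, from the top) has length equal to the number of E steps
  before the (a+1-i)-th N step; rows beyond a are empty.\<close>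

definition nth_N_pos :: "bool list \<Rightarrow> nat \<Rightarrow> nat" where
  "nth_N_pos P j = (LEAST k. k < length P \<and> P ! k \<and> count_list (take k P) True = j - 1)"

definition row :: "bool list \<Rightarrow> nat \<Rightarrow> nat" where
  "row P i = (let a = count_list P True in
     if 1 \<le> i \<and> i \<le> a then count_list (take (nth_N_pos P (a + 1 - i)) P) False else 0)"

definition col :: "bool list \<Rightarrow> nat \<Rightarrow> nat" where
  "col P j = card {i. 1 \<le> i \<and> i \<le> count_list P True \<and> j \<le> row P i}"

definition durfee :: "bool list \<Rightarrow> nat" where
  "durfee P = Max {d. d \<le> count_list P True \<and> (d = 0 \<or> d \<le> row P d)}"

definition hd_set :: "bool list \<Rightarrow> nat set" where
  "hd_set P = {row P i + col P i + 1 - 2 * i | i. 1 \<le> i \<and> i \<le> durfee P}"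

definition hd_star :: "bool list \<Rightarrow> nat set" where
  "hd_star P = (if P \<noteq> [] \<and> hd P then hd_set P \<union> {length P} else hd_set P)"

end

theory Submission
  imports Defs
begin


definition ct :: "bool list \<Rightarrow> nat \<Rightarrow> nat" where
  "ct xs k = count_list (take k xs) True"
definition cf :: "bool list \<Rightarrow> nat \<Rightarrow> nat" where
  "cf xs k = count_list (take k xs) False"

lemma count_TF: "count_list xs True + count_list xs False = length (xs::bool list)"
  by (induction xs) auto

lemma ct_cf: "k \<le> length xs \<Longrightarrow> ct xs k + cf xs k = k"
  unfolding ct_def cf_def using count_TF[of "take k xs"] by simp

lemma ct_Suc: "k < length xs \<Longrightarrow> ct xs (Suc k) = ct xs k + (if xs!k then 1 else 0)"
  unfolding ct_def by (simp add: take_Suc_conv_app_nth)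

lemma cf_Suc: "k < length xs \<Longrightarrow> cf xs (Suc k) = cf xs k + (if xs!k then 0 else 1)"
  unfolding cf_def by (simp add: take_Suc_conv_app_nth)

lemma ct_0[simp]: "ct xs 0 = 0" and cf_0[simp]: "cf xs 0 = 0"
  unfolding ct_def cf_def by auto

lemma ct_len: "length xs \<le> k \<Longrightarrow> ct xs k = count_list xs True"
  unfolding ct_def by simp
lemma cf_len: "length xs \<le> k \<Longrightarrow> cf xs k = count_list xs False"
  unfolding cf_def by simp

lemma take_split: "i \<le> j \<Longrightarrow> take j xs = take i xs @ take (j - i) (drop i xs)"
  by (metis le_add_diff_inverse take_add)

lemma ct_mono: "i \<le> j \<Longrightarrow> ct xs i \<le> ct xs j"
  unfolding ct_def using take_split[of i j xs] by simp
lemma cf_mono: "i \<le> j \<Longrightarrow> cf xs i \<le> cf xs j"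
  unfolding cf_def using take_split[of i j xs] by simp

lemma ct_le: "ct xs k \<le> count_list xs True"
  by (metis ct_len ct_mono nat_le_linear ct_def take_all)
lemma cf_le: "cf xs k \<le> count_list xs False"
  by (metis cf_len cf_mono nat_le_linear cf_def take_all)

lemma ct_lt: "i < j \<Longrightarrow> j \<le> length xs \<Longrightarrow> xs!i \<Longrightarrow> ct xs i < ct xs j"
  using ct_Suc[of i xs] ct_mono[of "Suc i" j xs] by simp
lemma cf_lt: "i < j \<Longrightarrow> j \<le> length xs \<Longrightarrow> \<not> xs!i \<Longrightarrow> cf xs i < cf xs j"
  using cf_Suc[of i xs] cf_mono[of "Suc i" j xs] by simp

lemma NEX: assumes "j < count_list xs True"
  shows "\<exists>k < length xs. xs!k \<and> ct xs k = j"
proof -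
  have ex: "\<exists>k. j < ct xs (Suc k)"
    using assms ct_len[of xs "Suc (length xs)"] by (metis le_imp_less_Suc less_or_eq_imp_le)
  define k where "k = (LEAST k. j < ct xs (Suc k))"
  have k1: "j < ct xs (Suc k)" unfolding k_def by (rule LeastI_ex[OF ex])
  have k2: "ct xs k \<le> j"
  proof (cases k)
    case 0 then show ?thesis by simp
  next
    case (Suc m)
    have "m < k" using Suc by simp
    then have "\<not> j < ct xs (Suc m)" unfolding k_def by (rule not_less_Least)
    then show ?thesis using Suc by simp
  qed
  have kl: "k < length xs"
  proof (rule ccontr)
    assume "\<not> k < length xs"
    then have "ct xs (Suc k) = ct xs k" using ct_len[of xs k] ct_len[of xs "Suc k"] by simp
    then show False using k1 k2 by simp
  qed
  then show ?thesis using k1 k2 ct_Suc[OF kl] by (intro exI[of _ k]) (auto split: if_splits)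
qed

lemma EEX: assumes "j < count_list xs False"
  shows "\<exists>k < length xs. \<not> xs!k \<and> cf xs k = j"
proof -
  have ex: "\<exists>k. j < cf xs (Suc k)"
    using assms cf_len[of xs "Suc (length xs)"] by (metis le_imp_less_Suc less_or_eq_imp_le)
  define k where "k = (LEAST k. j < cf xs (Suc k))"
  have k1: "j < cf xs (Suc k)" unfolding k_def by (rule LeastI_ex[OF ex])
  have k2: "cf xs k \<le> j"
  proof (cases k)
    case 0 then show ?thesis by simp
  next
    case (Suc m)
    have "m < k" using Suc by simp
    then have "\<not> j < cf xs (Suc m)" unfolding k_def by (rule not_less_Least)
    then show ?thesis using Suc by simp
  qed
  have kl: "k < length xs"
  proof (rule ccontr)
    assume "\<not> k < length xs"
    then have "cf xs (Suc k) = cf xs k" using cf_len[of xs k] cf_len[of xs "Suc k"] by simp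
    then show False using k1 k2 by simp
  qed
  then show ?thesis using k1 k2 cf_Suc[OF kl] by (intro exI[of _ k]) (auto split: if_splits)
qed

lemma N_uniq: "p < length xs \<Longrightarrow> xs!p \<Longrightarrow> p' < length xs \<Longrightarrow> xs!p' \<Longrightarrow> ct xs p = ct xs p' \<Longrightarrow> p = p'"
  by (metis ct_lt less_imp_le_nat linorder_neqE_nat nat_less_le)
lemma E_uniq: "p < length xs \<Longrightarrow> \<not>xs!p \<Longrightarrow> p' < length xs \<Longrightarrow> \<not>xs!p' \<Longrightarrow> cf xs p = cf xs p' \<Longrightarrow> p = p'"
  by (metis cf_lt less_imp_le_nat linorder_neqE_nat nat_less_le)

lemma nthN: assumes "k < length Q" "Q!k" "ct Q k = j - 1"
  shows "nth_N_pos Q j = k"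
  unfolding nth_N_pos_def
proof (rule Least_equality)
  show "k < length Q \<and> Q ! k \<and> count_list (take k Q) True = j - 1" using assms ct_def by auto
next
  fix y assume "y < length Q \<and> Q ! y \<and> count_list (take y Q) True = j - 1"
  then have "y = k" using N_uniq[of y Q k] assms ct_def by auto
  then show "k \<le> y" by simp
qed



lemma YD: "Q \<in> Y a b \<Longrightarrow> length Q = a + b \<and> count_list Q True = a \<and> count_list Q False = b"
  unfolding Y_def using count_TF[of Q] by auto

lemma row_eq: assumes Q: "Q \<in> Y a b" and i: "1 \<le> i" "i \<le> a"
  and p: "p < length Q" "Q!p" "ct Q p = a - i"
  shows "row Q i = cf Q p"
proof -
  have "nth_N_pos Q (a + 1 - i) = p" using nthN[OF p(1,2)] p(3) by simp
  then show ?thesis using YD[OF Q] i unfolding row_def cf_def by (simp add: Let_def)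
qed

lemma pex: assumes Q: "Q \<in> Y a b" and i: "1 \<le> i" "i \<le> a"
  shows "\<exists>p < length Q. Q!p \<and> ct Q p = a - i"
  using NEX[of "a - i" Q] YD[OF Q] i by auto

lemma col_eq: assumes Q: "Q \<in> Y a b" and j: "1 \<le> j"
  and q: "q < length Q" "\<not> Q!q" "cf Q q = j - 1"
  shows "col Q j = a - ct Q q"
proof -
  have "{i. 1 \<le> i \<and> i \<le> count_list Q True \<and> j \<le> row Q i} = {1..a - ct Q q}"
  proof (intro set_eqI iffI)
    fix i assume "i \<in> {i. 1 \<le> i \<and> i \<le> count_list Q True \<and> j \<le> row Q i}"
    then have i: "1 \<le> i" "i \<le> a" "j \<le> row Q i" using YD[OF Q] by auto
    obtain p where p: "p < length Q" "Q!p" "ct Q p = a - i" using pex[OF Q i(1,2)] by blast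
    have r: "row Q i = cf Q p" by (rule row_eq[OF Q i(1,2) p])
    have "q < p"
    proof (rule ccontr)
      assume "\<not> q < p"
      then have "p \<le> q" by simp
      then have "cf Q p \<le> cf Q q" by (rule cf_mono)
      then show False using i r q j by simp
    qed
    then have "ct Q (Suc q) \<le> ct Q p" by (intro ct_mono) simp
    then show "i \<in> {1..a - ct Q q}" using ct_Suc[OF q(1)] q(2) p i by simp
  next
    fix i assume "i \<in> {1..a - ct Q q}"
    then have i: "1 \<le> i" "i \<le> a" "i \<le> a - ct Q q" by auto
    obtain p where p: "p < length Q" "Q!p" "ct Q p = a - i" using pex[OF Q i(1,2)] by blast
    have r: "row Q i = cf Q p" by (rule row_eq[OF Q i(1,2) p])
    have "q < p"
    proof (rule ccontr)
      assume "\<not> q < p"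
      then have "p < q" using p q by (metis linorder_neqE_nat)
      then have "ct Q p < ct Q q" using ct_lt[of p q Q] p q by simp
      then show False using i p by simp
    qed
    then have "cf Q (Suc q) \<le> cf Q p" by (intro cf_mono) simp
    then have "j \<le> row Q i" using cf_Suc[OF q(1)] q j r by simp
    then show "i \<in> {i. 1 \<le> i \<and> i \<le> count_list Q True \<and> j \<le> row Q i}"
      using i YD[OF Q] by simp
  qed
  then show ?thesis unfolding col_def by simp
qed

lemma row_mono1: assumes Q: "Q \<in> Y a b" and i: "1 \<le> i" "Suc i \<le> a"
  shows "row Q (Suc i) \<le> row Q i"
proof -
  obtain p where p: "p < length Q" "Q!p" "ct Q p = a - i" using pex[OF Q, of i] i by auto
  obtain p' where p': "p' < length Q" "Q!p'" "ct Q p' = a - Suc i" using pex[OF Q, of "Suc i"] i by auto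
  have "p' < p"
  proof (rule ccontr)
    assume "\<not> p' < p"
    then have "p \<le> p'" by simp
    moreover have "p \<noteq> p'" using p p' i by auto
    ultimately have "p < p'" by simp
    then have "ct Q p < ct Q p'" using ct_lt[of p p' Q] p(2) p'(1) by simp
    then show False using p(3) p'(3) i by simp
  qed
  then show ?thesis using row_eq[OF Q _ _ p] row_eq[OF Q _ _ p'] i cf_mono[of p' p Q] by simp
qed

lemma row_mono: assumes Q: "Q \<in> Y a b" and "1 \<le> i" "i \<le> j" "j \<le> a"
  shows "row Q j \<le> row Q i"
  using assms(3,4)
proof (induction j rule: dec_induct)
  case base then show ?case by simp
next
  case (step n)
  then show ?case using row_mono1[OF Q, of n] assms(2) by simp
qed

lemma durfee_iff: assumes Q: "Q \<in> Y a b" and i: "1 \<le> i"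
  shows "i \<le> durfee Q \<longleftrightarrow> i \<le> a \<and> i \<le> row Q i"
proof -
  define S where "S = {d. d \<le> count_list Q True \<and> (d = 0 \<or> d \<le> row Q d)}"
  have fin: "finite S" unfolding S_def by (rule finite_subset[of _ "{..count_list Q True}"]) auto
  have "0 \<in> S" unfolding S_def by simp
  then have DS: "durfee Q \<in> S" unfolding durfee_def S_def[symmetric] using fin Max_in by blast
  show ?thesis
  proof
    assume "i \<le> durfee Q"
    then show "i \<le> a \<and> i \<le> row Q i" using DS row_mono[OF Q i, of "durfee Q"] YD[OF Q] i
      unfolding S_def by auto
  next
    assume "i \<le> a \<and> i \<le> row Q i"
    then have "i \<in> S" using YD[OF Q] unfolding S_def by simp
    then show "i \<le> durfee Q" unfolding durfee_def S_def[symmetric] using fin by simp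
  qed
qed

definition H :: "nat \<Rightarrow> nat \<Rightarrow> bool list \<Rightarrow> nat set" where
  "H a b Q = {p - q | p q. a \<le> p \<and> p < a + b \<and> Q!p \<and> q < a \<and> \<not> Q!q \<and> ct Q p + cf Q q + 1 = a}"

lemma hd_set_H: assumes Q: "Q \<in> Y a b" shows "hd_set Q = H a b Q"
proof (intro set_eqI iffI)
  note YQ = YD[OF Q]
  fix x assume "x \<in> hd_set Q"
  then obtain i where x: "x = row Q i + col Q i + 1 - 2 * i" and i: "1 \<le> i" "i \<le> durfee Q"
    unfolding hd_set_def by auto
  have i2: "i \<le> a" "i \<le> row Q i" using durfee_iff[OF Q i(1)] i by auto
  obtain p where p: "p < length Q" "Q!p" "ct Q p = a - i" using pex[OF Q i(1) i2(1)] by blast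
  have r: "row Q i = cf Q p" by (rule row_eq[OF Q i(1) i2(1) p])
  have pa: "ct Q p + cf Q p = p" using ct_cf[of p Q] p by simp
  have "cf Q p \<le> b" using cf_le[of Q p] YQ by simp
  then have "i - 1 < count_list Q False" using YQ i i2 r by linarith
  then obtain q where q: "q < length Q" "\<not> Q!q" "cf Q q = i - 1"
    using EEX[of "i - 1" Q] by blast
  have "q < p"
  proof (rule ccontr)
    assume "\<not> q < p"
    then have "cf Q p \<le> cf Q q" by (intro cf_mono) simp
    then show False using r i2 q i by simp
  qed
  then have ctq: "ct Q q \<le> ct Q p" by (intro ct_mono) simp
  have qa: "ct Q q + cf Q q = q" using ct_cf[of q Q] q by simp
  have c: "col Q i = a - ct Q q" by (rule col_eq[OF Q i(1) q])
  have e1: "x = p - q" using x r c p(3) q(3) pa qa ctq i i2 by linarith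
  have e2: "a \<le> p" using r p(3) pa i2 by linarith
  have e3: "q < a" using q(3) qa ctq p(3) i i2 by linarith
  have e4: "ct Q p + cf Q q + 1 = a" using p(3) q(3) i i2 by linarith
  show "x \<in> H a b Q" unfolding H_def
    using e1 e2 e3 e4 p(1,2) q(2) YQ by auto
next
  note YQ = YD[OF Q]
  fix x assume "x \<in> H a b Q"
  then obtain p q where x: "x = p - q" and pq: "a \<le> p" "p < a + b" "Q!p" "q < a" "\<not> Q!q"
     "ct Q p + cf Q q + 1 = a" unfolding H_def by blast
  define i where "i = a - ct Q p"
  have pl: "p < length Q" "q < length Q" using pq YQ by auto
  have "ct Q (Suc p) \<le> a" using ct_le[of Q "Suc p"] YQ by simp
  then have cta: "ct Q p < a" using ct_Suc[OF pl(1)] pq by simp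
  then have i: "1 \<le> i" "i \<le> a" "ct Q p = a - i" unfolding i_def by auto
  have r: "row Q i = cf Q p" by (rule row_eq[OF Q i(1,2) pl(1) pq(3) i(3)])
  have pa: "ct Q p + cf Q p = p" using ct_cf[of p Q] pl by simp
  have qa: "ct Q q + cf Q q = q" using ct_cf[of q Q] pl by simp
  have ir: "i \<le> row Q i" using r pa pq(1) i_def by simp
  have id: "i \<le> durfee Q" using durfee_iff[OF Q i(1)] ir i by simp
  have cq: "cf Q q = i - 1" using pq(6) i_def by simp
  have c: "col Q i = a - ct Q q" by (rule col_eq[OF Q i(1) pl(2) pq(5) cq])
  have "ct Q q \<le> a" using ct_le[of Q q] YQ by simp
  then have "x = row Q i + col Q i + 1 - 2 * i" using x r c pa qa cq i pq(6) by linarith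
  then show "x \<in> hd_set Q" unfolding hd_set_def using i(1) id by blast
qed



definition V :: "bool list \<Rightarrow> (nat \<times> nat) set" where
  "V P = {(cf P (Suc i), ct P (Suc i)) | i. Suc i < length P \<and> P!i \<and> \<not> P!Suc i}"

lemma Peak_V: "Peak P = (\<lambda>v. fst v + snd v) ` V P"
proof -
  have h: "\<And>i. Suc i < length P \<Longrightarrow> cf P (Suc i) + ct P (Suc i) = Suc i"
    using ct_cf by (metis add.commute less_or_eq_imp_le)
  show ?thesis
  proof (intro set_eqI iffI)
    fix x assume "x \<in> Peak P"
    then obtain i where i: "x = i + 1" "Suc i < length P" "P!i" "\<not> P!Suc i" unfolding Peak_def by blast
    then have "(cf P (Suc i), ct P (Suc i)) \<in> V P" unfolding V_def by blast
    moreover have "x = fst (cf P (Suc i), ct P (Suc i)) + snd (cf P (Suc i), ct P (Suc i))" using h[OF i(2)] i(1) by simp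
    ultimately show "x \<in> (\<lambda>v. fst v + snd v) ` V P" by (rule rev_image_eqI)
  next
    fix x assume "x \<in> (\<lambda>v. fst v + snd v) ` V P"
    then obtain i where i: "x = cf P (Suc i) + ct P (Suc i)" "Suc i < length P" "P!i" "\<not> P!Suc i"
      unfolding V_def by auto
    then have "x = i + 1" using h by simp
    then show "x \<in> Peak P" unfolding Peak_def using i by blast
  qed
qed

lemma finite_V: "finite (V P)"
proof -
  have "V P = (\<lambda>i. (cf P (Suc i), ct P (Suc i))) ` {i. Suc i < length P \<and> P!i \<and> \<not> P!Suc i}"
    unfolding V_def by auto
  then show ?thesis by (metis (no_types, lifting) finite_imageI finite_subset[of _ "{..<length P}"] lessThan_iff subsetI mem_Collect_eq Suc_lessD finite_lessThan)
qed

lemma V_step: assumes "Suc i < length P" "P!i" "\<not> P!Suc i" "Suc j < length P" "P!j" "\<not> P!Suc j" "i < j"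
  shows "cf P (Suc i) < cf P (Suc j) \<and> ct P (Suc i) < ct P (Suc j)"
proof
  have "Suc i < Suc j" using assms by simp
  then have "cf P (Suc i) < cf P (Suc (Suc i))" using cf_Suc[of "Suc i" P] assms by simp
  moreover have "cf P (Suc (Suc i)) \<le> cf P (Suc j)" using assms by (intro cf_mono) simp
  ultimately show "cf P (Suc i) < cf P (Suc j)" by simp
next
  have "Suc i \<noteq> j" using assms by auto
  then have "Suc i \<le> j" using assms by simp
  then have "ct P (Suc i) \<le> ct P j" by (rule ct_mono)
  then show "ct P (Suc i) < ct P (Suc j)" using ct_Suc[of j P] assms by simp
qed

lemma chain: assumes "v \<in> V P" "w \<in> V P"
  shows "(fst v < fst w \<longleftrightarrow> snd v < snd w) \<and> (fst v = fst w \<longleftrightarrow> v = w) \<and> (snd v = snd w \<longleftrightarrow> v = w)"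
proof -
  obtain i where i: "v = (cf P (Suc i), ct P (Suc i))" "Suc i < length P" "P!i" "\<not> P!Suc i"
    using assms(1) unfolding V_def by blast
  obtain j where j: "w = (cf P (Suc j), ct P (Suc j))" "Suc j < length P" "P!j" "\<not> P!Suc j"
    using assms(2) unfolding V_def by blast
  consider "i < j" | "i = j" | "j < i" by linarith
  then show ?thesis
  proof cases
    case 1 then show ?thesis using V_step[OF i(2-4) j(2-4)] i j by auto
  next
    case 2 then show ?thesis using i j by auto
  next
    case 3 then show ?thesis using V_step[OF j(2-4) i(2-4)] i j by auto
  qed
qed

lemma inj_fst: "inj_on fst (V P)"
proof (rule inj_onI)
  fix v w assume "v \<in> V P" "w \<in> V P" "fst v = fst w" then show "v = w" using chain[of v P w] by simp
qed
lemma inj_snd: "inj_on snd (V P)"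
proof (rule inj_onI)
  fix v w assume "v \<in> V P" "w \<in> V P" "snd v = snd w" then show "v = w" using chain[of v P w] by simp
qed

lemma V_bounds: assumes P: "P \<in> Y a b" and v: "v \<in> V P"
  shows "fst v < b \<and> 1 \<le> snd v \<and> snd v \<le> a"
proof -
  obtain i where i: "v = (cf P (Suc i), ct P (Suc i))" "Suc i < length P" "P!i" "\<not> P!Suc i"
    using v unfolding V_def by blast
  have "cf P (Suc i) < cf P (Suc (Suc i))" using cf_Suc[of "Suc i" P] i by simp
  moreover have "cf P (Suc (Suc i)) \<le> b" using cf_le[of P] YD[OF P] by metis
  moreover have "ct P (Suc i) \<le> a" using ct_le[of P] YD[OF P] by metis
  moreover have "ct P (Suc i) \<ge> 1" using ct_Suc[of i P] i by simp
  ultimately show ?thesis using i by simp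
qed

lemma card_fst_V: "card (fst ` V P) = card (V P)" and card_snd_V: "card (snd ` V P) = card (V P)"
  using card_image[OF inj_fst] card_image[OF inj_snd] by auto

lemma rank_V: assumes v: "v \<in> V P"
  shows "card {e \<in> fst ` V P. fst v < e} = card {n \<in> snd ` V P. snd v < n}"
proof -
  let ?W = "{w \<in> V P. fst v < fst w}"
  have 1: "{e \<in> fst ` V P. fst v < e} = fst ` ?W" by auto
  have 2: "{n \<in> snd ` V P. snd v < n} = snd ` ?W" using chain[OF v] by auto
  have "card (fst ` ?W) = card ?W" by (rule card_image) (rule inj_on_subset[OF inj_fst], auto)
  moreover have "card (snd ` ?W) = card ?W" by (rule card_image) (rule inj_on_subset[OF inj_snd], auto)
  ultimately show ?thesis using 1 2 by simp
qed

lemma card_gt_inj: assumes "finite S" "x \<in> S" "y \<in> S" "card {s \<in> S. x < s} = card {s \<in> S. (y::nat) < s}"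
  shows "x = y"
proof (rule ccontr)
  assume ne: "x \<noteq> y"
  { fix x y :: nat assume "x < y" "x \<in> S" "y \<in> S"
    then have "{s \<in> S. y < s} \<subset> {s \<in> S. x < s}" by auto
    then have "card {s \<in> S. y < s} < card {s \<in> S. x < s}" using assms(1) by (intro psubset_card_mono) auto }
  note * = this
  show False using ne *[of x y] *[of y x] assms by (cases "x < y") auto
qed

lemma V_char: "V P = {(e, n). e \<in> fst ` V P \<and> n \<in> snd ` V P \<and>
     card {e' \<in> fst ` V P. e < e'} = card {n' \<in> snd ` V P. n < n'}}"
proof (intro set_eqI iffI)
  fix v assume "v \<in> V P"
  then show "v \<in> {(e, n). e \<in> fst ` V P \<and> n \<in> snd ` V P \<and>
     card {e' \<in> fst ` V P. e < e'} = card {n' \<in> snd ` V P. n < n'}}"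
    using rank_V[of v P] by (cases v) (simp add: rev_image_eqI)
next
  fix v assume "v \<in> {(e, n). e \<in> fst ` V P \<and> n \<in> snd ` V P \<and>
     card {e' \<in> fst ` V P. e < e'} = card {n' \<in> snd ` V P. n < n'}}"
  then obtain e n where v: "v = (e, n)" "e \<in> fst ` V P" "n \<in> snd ` V P"
    "card {e' \<in> fst ` V P. e < e'} = card {n' \<in> snd ` V P. n < n'}" by blast
  then obtain w where w: "w \<in> V P" "fst w = e" by auto
  have "card {n' \<in> snd ` V P. snd w < n'} = card {n' \<in> snd ` V P. n < n'}"
    using rank_V[OF w(1)] v w by simp
  then have "snd w = n" using card_gt_inj[of "snd ` V P" "snd w" n] finite_V w v by auto
  then show "v \<in> V P" using w v by (metis prod.collapse)
qed



lemma allN: assumes "i \<le> j" "j \<le> length P" "\<forall>m. i \<le> m \<and> m < j \<longrightarrow> P!m"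
  shows "cf P j = cf P i \<and> ct P j = ct P i + (j - i)"
  using assms
proof (induction j rule: dec_induct)
  case base then show ?case by simp
next
  case (step n)
  then show ?case using cf_Suc[of n P] ct_Suc[of n P] by simp
qed

lemma step_char: assumes P: "P \<in> Y a b" and i: "i < length P"
  shows "P!i \<longleftrightarrow> (cf P i = b \<or> (\<exists>y > ct P i. (cf P i, y) \<in> V P))"
proof
  assume Pi: "P!i"
  show "cf P i = b \<or> (\<exists>y > ct P i. (cf P i, y) \<in> V P)"
  proof (cases "cf P i = b")
    case True then show ?thesis by simp
  next
    case False
    have ex: "\<exists>j. i < j \<and> j < length P \<and> \<not> P!j"
    proof (rule ccontr)
      assume "\<not> ?thesis"
      then have "cf P (length P) = cf P i" using allN[of i "length P" P] i Pi
        by (metis le_eq_less_or_eq less_or_eq_imp_le)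
      then show False using False cf_len[of P "length P"] YD[OF P] by simp
    qed
    define j where "j = (LEAST j. i < j \<and> j < length P \<and> \<not> P!j)"
    have j: "i < j" "j < length P" "\<not> P!j" unfolding j_def using LeastI_ex[OF ex] by auto
    have jm: "\<forall>m. i \<le> m \<and> m < j \<longrightarrow> P!m"
    proof (intro allI impI)
      fix m assume m: "i \<le> m \<and> m < j"
      show "P!m"
      proof (cases "m = i")
        case True then show ?thesis using Pi by simp
      next
        case False
        then have "i < m" using m by simp
        have "\<not> (i < m \<and> m < length P \<and> \<not> P!m)" using m unfolding j_def using not_less_Least by blast
        then show ?thesis using \<open>i < m\<close> m j by simp
      qed
    qed
    obtain k where k: "j = Suc k" using j by (cases j) auto
    have Pk: "P!k" using jm k j by simp
    have eq: "cf P j = cf P i \<and> ct P j = ct P i + (j - i)" using allN[of i j P] j jm by simp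
    have "(cf P j, ct P j) \<in> V P" unfolding V_def using k j Pk by blast
    then show ?thesis using eq j by (intro disjI2 exI[of _ "ct P j"]) auto
  qed
next
  assume h: "cf P i = b \<or> (\<exists>y > ct P i. (cf P i, y) \<in> V P)"
  show "P!i"
  proof (rule ccontr)
    assume nPi: "\<not> P!i"
    have s: "cf P (Suc i) = cf P i + 1" using cf_Suc[OF i] nPi by simp
    have "cf P (Suc i) \<le> b" using cf_le[of P] YD[OF P] by metis
    then have "cf P i \<noteq> b" using s by simp
    then obtain y where y: "y > ct P i" "(cf P i, y) \<in> V P" using h by blast
    then obtain k where k: "cf P (Suc k) = cf P i" "ct P (Suc k) = y" "Suc k < length P" "P!k" "\<not> P!Suc k"
      unfolding V_def by auto
    show False
    proof (cases "Suc k \<le> i")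
      case True then show False using ct_mono[OF True, of P] k y by simp
    next
      case False
      then have "k \<noteq> i" using k nPi by auto
      then have "Suc i \<le> Suc k" using False by simp
      then show False using cf_mono[of "Suc i" "Suc k" P] s k by simp
    qed
  qed
qed

lemma V_inj: assumes P: "P \<in> Y a b" and P': "P' \<in> Y a b" and VV: "V P = V P'"
  shows "P = P'"
proof -
  have L: "length P = a + b" "length P' = a + b" using YD[OF P] YD[OF P'] by auto
  have "i \<le> a + b \<Longrightarrow> take i P = take i P'" for i
  proof (induction i)
    case 0 then show ?case by simp
  next
    case (Suc i)
    then have il: "i < length P" "i < length P'" using L by auto
    have t: "take i P = take i P'" using Suc by simp
    then have c: "ct P i = ct P' i" "cf P i = cf P' i" unfolding ct_def cf_def by auto
    have "P!i = P'!i" using step_char[OF P il(1)] step_char[OF P' il(2)] c VV by simp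
    then show ?case using t il by (simp add: take_Suc_conv_app_nth)
  qed
  from this[of "a+b"] show ?thesis using L by simp
qed

lemma flag: assumes P: "P \<in> Y a b" and a: "0 < a"
  shows "(P \<noteq> [] \<and> last P) \<longleftrightarrow> a \<notin> snd ` V P"
proof
  assume l: "P \<noteq> [] \<and> last P"
  then have ln: "P!(length P - 1)" by (metis last_conv_nth)
  show "a \<notin> snd ` V P"
  proof
    assume "a \<in> snd ` V P"
    then obtain i where i: "ct P (Suc i) = a" "Suc i < length P" "P!i" "\<not> P!Suc i"
      unfolding V_def by auto
    have "Suc i \<noteq> length P - 1" using i ln by auto
    then have "Suc i < length P - 1" using i by linarith
    then have "ct P (Suc i) \<le> ct P (length P - 1)" by (intro ct_mono) simp
    moreover have "ct P (length P - 1) < ct P (length P)" using ct_lt[of "length P - 1" "length P" P] ln l by simp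
    moreover have "ct P (length P) = a" using ct_len[of P "length P"] YD[OF P] by simp
    ultimately show False using i by simp
  qed
next
  assume na: "a \<notin> snd ` V P"
  obtain k where k: "k < length P" "P!k" "ct P k = a - 1" using NEX[of "a - 1" P] YD[OF P] a by auto
  have ck: "ct P (Suc k) = a" using ct_Suc[OF k(1)] k a by simp
  have ne: "P \<noteq> []" using k by auto
  show "P \<noteq> [] \<and> last P"
  proof (cases "Suc k < length P")
    case True
    have "\<not> P!Suc k"
    proof
      assume "P!Suc k"
      then have "ct P (Suc (Suc k)) = a + 1" using ct_Suc[OF True] ck by simp
      moreover have "ct P (Suc (Suc k)) \<le> a" using ct_le[of P] YD[OF P] by metis
      ultimately show False by simp
    qed
    then have "(cf P (Suc k), ct P (Suc k)) \<in> V P" unfolding V_def using True k by blast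
    then have "a \<in> snd ` V P" by (rule rev_image_eqI) (simp add: ck)
    then show ?thesis using na by simp
  next
    case False
    then have "k = length P - 1" using k by simp
    then show ?thesis using ne k by (simp add: last_conv_nth)
  qed
qed

lemma Peak_snoc: "Peak (P @ [False]) = Peak P \<union> (if P \<noteq> [] \<and> last P then {length P} else {})"
proof (intro set_eqI iffI)
  fix x assume "x \<in> Peak (P @ [False])"
  then obtain i where i: "x = i + 1" "Suc i < length P + 1" "(P @ [False])!i" "\<not> (P @ [False])!Suc i"
    unfolding Peak_def by auto
  show "x \<in> Peak P \<union> (if P \<noteq> [] \<and> last P then {length P} else {})"
  proof (cases "Suc i < length P")
    case True then show ?thesis using i unfolding Peak_def by (auto simp: nth_append)
  next
    case False
    then have si: "Suc i = length P" using i by simp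
    then have ne: "P \<noteq> []" by auto
    have "length P - 1 = i" using si by simp
    then have "last P = P!i" using last_conv_nth[OF ne] by simp
    moreover have "P!i" using i(3) si by (simp add: nth_append)
    ultimately show ?thesis using i(1) si ne by simp
  qed
next
  fix x assume x: "x \<in> Peak P \<union> (if P \<noteq> [] \<and> last P then {length P} else {})"
  show "x \<in> Peak (P @ [False])"
  proof (cases "x \<in> Peak P")
    case True then show ?thesis unfolding Peak_def by (auto simp: nth_append)
  next
    case False
    then have "P \<noteq> [] \<and> last P" "x = length P" using x by (auto split: if_splits)
    then show ?thesis unfolding Peak_def
      by (intro CollectI exI[of _ "length P - 1"]) (auto simp: nth_append last_conv_nth)
  qed
qed



lemma cnt_upt: "count_list (map f [0..<M]) v = card {m. m < M \<and> f m = v}"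
proof (induction M)
  case 0 then show ?case by simp
next
  case (Suc M)
  have "{m. m < Suc M \<and> f m = v} = {m. m < M \<and> f m = v} \<union> (if f M = v then {M} else {})"
    by (auto simp: less_Suc_eq)
  then show ?case using Suc by auto
qed

lemma cnt_take: "count_list (take k (map f [0..<M])) v = card {m. m < min k M \<and> f m = v}"
proof -
  have "take k [0..<M] = [0..<min k M]" by (cases "k \<le> M") (auto simp: take_upt min_def)
  then show ?thesis by (simp add: take_map cnt_upt)
qed

definition fT :: "nat \<Rightarrow> bool list \<Rightarrow> nat \<Rightarrow> bool" where
  "fT a P m = (if a \<le> m then (m - a) \<in> fst ` V P else (a - m) \<notin> snd ` V P)"

definition Tm :: "nat \<Rightarrow> nat \<Rightarrow> bool list \<Rightarrow> bool list" where
  "Tm a b P = map (fT a P) [0..<a+b]"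

lemma Tm_len[simp]: "length (Tm a b P) = a + b" unfolding Tm_def by simp

lemma Tm_nth: "m < a + b \<Longrightarrow> Tm a b P ! m = fT a P m"
  unfolding Tm_def by simp

lemma card_split: assumes "finite S" "(e::nat) \<in> S"
  shows "card S = card {x \<in> S. x < e} + 1 + card {x \<in> S. e < x}"
proof -
  have "S = {x \<in> S. x < e} \<union> {e} \<union> {x \<in> S. e < x}" using assms by auto
  moreover have "card ({x \<in> S. x < e} \<union> {e} \<union> {x \<in> S. e < x}) =
      card {x \<in> S. x < e} + card {e} + card {x \<in> S. e < x}"
    using assms(1) by (subst card_Un_disjoint; auto)+
  ultimately show ?thesis by simp
qed

lemma NN_card_le: assumes P: "P \<in> Y a b" shows "card (snd ` V P) \<le> a"
proof -
  have "snd ` V P \<subseteq> {1..a}" using V_bounds[OF P] by auto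
  then show ?thesis by (metis card_atLeastAtMost card_mono diff_Suc_1 finite_atLeastAtMost)
qed

lemma ctT: assumes P: "P \<in> Y a b" and p: "a \<le> p" "p \<le> a + b"
  shows "ct (Tm a b P) p = a - card (snd ` V P) + card {e \<in> fst ` V P. e < p - a}"
proof -
  let ?E = "fst ` V P" and ?N = "snd ` V P"
  have "ct (Tm a b P) p = card {m. m < p \<and> fT a P m}"
    unfolding ct_def Tm_def using cnt_take[of p "fT a P" "a+b" True] p by (simp add: min_def)
  also have "{m. m < p \<and> fT a P m} = ({..<a} - (\<lambda>n. a - n) ` ?N) \<union> (\<lambda>e. a + e) ` {e \<in> ?E. e < p - a}"
  proof (intro set_eqI iffI)
    fix m assume m: "m \<in> {m. m < p \<and> fT a P m}"
    show "m \<in> ({..<a} - (\<lambda>n. a - n) ` ?N) \<union> (\<lambda>e. a + e) ` {e \<in> ?E. e < p - a}"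
    proof (cases "a \<le> m")
      case True
      then have "m - a \<in> {e \<in> ?E. e < p - a}" using m unfolding fT_def by auto
      then have "a + (m - a) \<in> (\<lambda>e. a + e) ` {e \<in> ?E. e < p - a}" by (rule imageI)
      then show ?thesis using True by simp
    next
      case False
      then have "a - m \<notin> ?N" using m unfolding fT_def by auto
      moreover have "m \<notin> (\<lambda>n. a - n) ` ?N"
      proof
        assume "m \<in> (\<lambda>n. a - n) ` ?N"
        then obtain n where n: "n \<in> ?N" "m = a - n" by blast
        then have "n \<le> a" using V_bounds[OF P] by auto
        then have "a - m = n" using n by simp
        then show False using n calculation by simp
      qed
      ultimately show ?thesis using False by simp
    qed
  next
    fix m assume m: "m \<in> ({..<a} - (\<lambda>n. a - n) ` ?N) \<union> (\<lambda>e. a + e) ` {e \<in> ?E. e < p - a}"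
    show "m \<in> {m. m < p \<and> fT a P m}"
    proof (cases "a \<le> m")
      case True
      then obtain e where "e \<in> ?E" "e < p - a" "m = a + e" using m by auto
      then show ?thesis using True unfolding fT_def by auto
    next
      case False
      then have "m \<notin> (\<lambda>n. a - n) ` ?N" using m by auto
      then have "a - m \<notin> ?N" using False by (metis diff_diff_cancel image_eqI nat_le_linear)
      then show ?thesis using False p unfolding fT_def by auto
    qed
  qed
  also have "card (({..<a} - (\<lambda>n. a - n) ` ?N) \<union> (\<lambda>e. a + e) ` {e \<in> ?E. e < p - a}) =
     card ({..<a} - (\<lambda>n. a - n) ` ?N) + card ((\<lambda>e. a + e) ` {e \<in> ?E. e < p - a})"
    by (rule card_Un_disjoint) (auto simp: finite_V)
  also have "card ((\<lambda>e. a + e) ` {e \<in> ?E. e < p - a}) = card {e \<in> ?E. e < p - a}"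
    by (rule card_image) (simp add: inj_on_def)
  also have "card ({..<a} - (\<lambda>n. a - n) ` ?N) = a - card ((\<lambda>n. a - n) ` ?N)"
  proof -
    have "(\<lambda>n. a - n) ` ?N \<subseteq> {..<a}" using V_bounds[OF P] by fastforce
    then show ?thesis by (simp add: card_Diff_subset finite_V)
  qed
  also have "card ((\<lambda>n. a - n) ` ?N) = card ?N"
  proof (rule card_image)
    show "inj_on (\<lambda>n. a - n) ?N" unfolding inj_on_def using V_bounds[OF P]
      by (metis diff_diff_cancel image_iff)
  qed
  finally show ?thesis .
qed

lemma cfT: assumes P: "P \<in> Y a b" and q: "q \<le> a"
  shows "cf (Tm a b P) q = card {n \<in> snd ` V P. a - q < n}"
proof -
  let ?N = "snd ` V P"
  have "cf (Tm a b P) q = card {m. m < q \<and> fT a P m = False}"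
    unfolding cf_def Tm_def using cnt_take[of q "fT a P" "a+b" False] q by (simp add: min_def)
  also have "{m. m < q \<and> fT a P m = False} = (\<lambda>n. a - n) ` {n \<in> ?N. a - q < n}"
  proof (intro set_eqI iffI)
    fix m assume m: "m \<in> {m. m < q \<and> fT a P m = False}"
    then have "a - m \<in> ?N" "m < q" using q unfolding fT_def by auto
    then have "a - m \<in> {n \<in> ?N. a - q < n}" using q by auto
    moreover have "m = a - (a - m)" using \<open>m < q\<close> q by simp
    ultimately show "m \<in> (\<lambda>n. a - n) ` {n \<in> ?N. a - q < n}" by (rule rev_image_eqI)
  next
    fix m assume "m \<in> (\<lambda>n. a - n) ` {n \<in> ?N. a - q < n}"
    then obtain n where n: "n \<in> ?N" "a - q < n" "m = a - n" by blast
    then have "1 \<le> n" "n \<le> a" using V_bounds[OF P] by auto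
    then show "m \<in> {m. m < q \<and> fT a P m = False}" using n q unfolding fT_def by auto
  qed
  also have "card ((\<lambda>n. a - n) ` {n \<in> ?N. a - q < n}) = card {n \<in> ?N. a - q < n}"
  proof (rule card_image)
    show "inj_on (\<lambda>n. a - n) {n \<in> ?N. a - q < n}" unfolding inj_on_def using V_bounds[OF P]
      by (metis (no_types, lifting) diff_diff_cancel image_iff mem_Collect_eq)
  qed
  finally show ?thesis .
qed


lemma card_EN: "card (fst ` V P) = card (snd ` V P)"
  using card_fst_V card_snd_V by simp

lemma Tm_Y: assumes P: "P \<in> Y a b" shows "Tm a b P \<in> Y a b"
proof -
  have "ct (Tm a b P) (a + b) = a - card (snd ` V P) + card {e \<in> fst ` V P. e < a + b - a}"
    by (rule ctT[OF P]) auto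
  moreover have "{e \<in> fst ` V P. e < a + b - a} = fst ` V P" using V_bounds[OF P] by auto
  moreover have "ct (Tm a b P) (a + b) = count_list (Tm a b P) True" by (simp add: ct_len)
  ultimately have "count_list (Tm a b P) True = a" using card_EN[of P] NN_card_le[OF P] by simp
  then show ?thesis unfolding Y_def by simp
qed

lemma hd_Tm: assumes P: "P \<in> Y a b" shows "hd_set (Tm a b P) = Peak P"
proof -
  let ?Q = "Tm a b P" and ?E = "fst ` V P" and ?N = "snd ` V P"
  have fE: "finite ?E" "finite ?N" using finite_V by auto
  have cle: "card ?N \<le> a" by (rule NN_card_le[OF P])
  have "H a b ?Q = Peak P"
  proof (intro set_eqI iffI)
    fix x assume "x \<in> H a b ?Q"
    then obtain p q where x: "x = p - q" and pq: "a \<le> p" "p < a + b" "?Q!p" "q < a" "\<not> ?Q!q"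
     "ct ?Q p + cf ?Q q + 1 = a" unfolding H_def by blast
    define e where "e = p - a"
    define n where "n = a - q"
    have eE: "e \<in> ?E" using pq Tm_nth[of p a b P] unfolding fT_def e_def by simp
    have nN: "n \<in> ?N" using pq Tm_nth[of q a b P] unfolding fT_def n_def by simp
    have c1: "ct ?Q p = a - card ?N + card {e' \<in> ?E. e' < e}" using ctT[OF P pq(1)] pq(2) e_def by simp
    have c2: "cf ?Q q = card {n' \<in> ?N. n < n'}" using cfT[OF P] pq(4) n_def by simp
    have sp: "card ?E = card {x \<in> ?E. x < e} + 1 + card {x \<in> ?E. e < x}" by (rule card_split[OF fE(1) eE])
    have "card {x \<in> ?E. e < x} = card {n' \<in> ?N. n < n'}"
      using pq(6) c1 c2 sp card_EN[of P] cle by linarith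
    then have "(e, n) \<in> V P" using eE nN V_char[of P] by blast
    moreover have "x = fst (e, n) + snd (e, n)" using x e_def n_def pq by simp
    ultimately show "x \<in> Peak P" unfolding Peak_V by (rule rev_image_eqI)
  next
    fix x assume "x \<in> Peak P"
    then obtain v where v: "v \<in> V P" "x = fst v + snd v" unfolding Peak_V by blast
    obtain e n where en: "v = (e, n)" by (cases v)
    have b: "e < b" "1 \<le> n" "n \<le> a" using V_bounds[OF P v(1)] en by auto
    have eE: "e \<in> ?E" and nN: "n \<in> ?N" using v en by (auto intro: rev_image_eqI)
    define p where "p = a + e"
    define q where "q = a - n"
    have pq: "a \<le> p" "p < a + b" "q < a" "q \<le> a" using b p_def q_def by auto
    have Qp: "?Q!p" using Tm_nth[of p a b P] pq eE unfolding fT_def p_def by simp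
    have Qq: "\<not> ?Q!q" using Tm_nth[of q a b P] pq nN b unfolding fT_def q_def by simp
    have c1: "ct ?Q p = a - card ?N + card {e' \<in> ?E. e' < e}" using ctT[OF P pq(1)] pq(2) p_def by simp
    have c2: "cf ?Q q = card {n' \<in> ?N. n < n'}" using cfT[OF P pq(4)] q_def b by simp
    have sp: "card ?E = card {x \<in> ?E. x < e} + 1 + card {x \<in> ?E. e < x}" by (rule card_split[OF fE(1) eE])
    have rk: "card {x \<in> ?E. e < x} = card {n' \<in> ?N. n < n'}" using rank_V[OF v(1)] en by simp
    have "ct ?Q p + cf ?Q q + 1 = a" using c1 c2 sp rk card_EN[of P] cle by linarith
    moreover have "x = p - q" using v en p_def q_def b by simp
    ultimately show "x \<in> H a b ?Q" unfolding H_def using pq Qp Qq by blast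
  qed
  then show ?thesis using hd_set_H[OF Tm_Y[OF P]] by simp
qed

lemma Tm_E: assumes P: "P \<in> Y a b" shows "fst ` V P = {e. e < b \<and> Tm a b P ! (a + e)}"
  using V_bounds[OF P] Tm_nth[of _ a b P] unfolding fT_def by force

lemma Tm_N: assumes P: "P \<in> Y a b" shows "snd ` V P = {n. 1 \<le> n \<and> n \<le> a \<and> \<not> Tm a b P ! (a - n)}"
proof (intro set_eqI iffI)
  fix n assume n: "n \<in> snd ` V P"
  then have "1 \<le> n" "n \<le> a" using V_bounds[OF P] by auto
  then show "n \<in> {n. 1 \<le> n \<and> n \<le> a \<and> \<not> Tm a b P ! (a - n)}"
    using n Tm_nth[of "a - n" a b P] unfolding fT_def by simp
next
  fix n assume n: "n \<in> {n. 1 \<le> n \<and> n \<le> a \<and> \<not> Tm a b P ! (a - n)}"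
  have "a - n < a + b" "\<not> a \<le> a - n" "a - (a - n) = n" using n by auto
  then show "n \<in> snd ` V P" using n Tm_nth[of "a - n" a b P] unfolding fT_def by simp
qed

lemma Tm_inj: "inj_on (Tm a b) (Y a b)"
proof (rule inj_onI)
  fix P P' assume P: "P \<in> Y a b" and P': "P' \<in> Y a b" and eq: "Tm a b P = Tm a b P'"
  have "fst ` V P = fst ` V P'" using Tm_E[OF P] Tm_E[OF P'] eq by simp
  moreover have "snd ` V P = snd ` V P'" using Tm_N[OF P] Tm_N[OF P'] eq by simp
  ultimately have "V P = V P'" using V_char[of P] V_char[of P'] by simp
  then show "P = P'" by (rule V_inj[OF P P'])
qed

lemma finite_Y: "finite (Y a b)"
proof -
  have "Y a b \<subseteq> {xs. set xs \<subseteq> UNIV \<and> length xs = a + b}" unfolding Y_def by auto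
  then show ?thesis using finite_lists_length_eq[of "UNIV :: bool set" "a+b"] finite_subset by auto
qed

lemma Tm_bij: "bij_betw (Tm a b) (Y a b) (Y a b)"
proof -
  have sub: "Tm a b ` Y a b \<subseteq> Y a b" using Tm_Y by blast
  have "card (Tm a b ` Y a b) = card (Y a b)" by (rule card_image[OF Tm_inj])
  then have "Tm a b ` Y a b = Y a b" using card_subset_eq[OF finite_Y sub] by simp
  then show ?thesis unfolding bij_betw_def using Tm_inj by simp
qed

lemma star_Tm: assumes P: "P \<in> Y a b"
  shows "PeakStar P = hd_star (Tm a b P)"
proof -
  let ?Q = "Tm a b P"
  have flags: "(P \<noteq> [] \<and> last P) \<longleftrightarrow> (?Q \<noteq> [] \<and> hd ?Q)"
  proof (cases "a = 0")
    case True
    then have "True \<notin> set P" using YD[OF P] count_list_0_iff by metis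
    then have l: "\<not> (P \<noteq> [] \<and> last P)" using last_in_set by metis
    have "V P = {}" using V_bounds[OF P] True by fastforce
    have "?Q \<noteq> [] \<Longrightarrow> 0 < a + b" using Tm_len[of a b P] by (metis length_greater_0_conv)
    then have "\<not> (?Q \<noteq> [] \<and> hd ?Q)" using Tm_nth[of 0 a b P] True \<open>V P = {}\<close> unfolding fT_def
      by (auto simp: hd_conv_nth)
    then show ?thesis using l by blast
  next
    case False
    then have "?Q \<noteq> []" "hd ?Q = ?Q!0" using hd_conv_nth[of ?Q] by (auto simp: Tm_def)
    then have "(?Q \<noteq> [] \<and> hd ?Q) \<longleftrightarrow> a \<notin> snd ` V P" using Tm_nth[of 0 a b P] False unfolding fT_def by simp
    then show ?thesis using flag[OF P] False by simp
  qed
  have len: "length ?Q = length P" using YD[OF P] by simp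
  show ?thesis unfolding PeakStar_def Peak_snoc hd_star_def hd_Tm[OF P] using flags len by auto
qed


theorem mainTheorem10:
  fixes a b :: nat
  shows "\<exists>g. bij_betw g (Y a b) (Y a b) \<and>
           (\<forall>P \<in> Y a b. Peak P = hd_set (g P) \<and> PeakStar P = hd_star (g P))"
proof (intro exI[of _ "Tm a b"] conjI ballI)
  show "bij_betw (Tm a b) (Y a b) (Y a b)" by (rule Tm_bij)
next
  fix P assume P: "P \<in> Y a b"
  show "Peak P = hd_set (Tm a b P)" using hd_Tm[OF P] by simp
  show "PeakStar P = hd_star (Tm a b P)" by (rule star_Tm[OF P])
qed

end
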